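(* There is an absolute constant $K>0$ such that the following holds. Let $n,p,k,b$ be positive integers with $2\le p\le n$ and $1\le k\le n/b$. (i) For every $\gamma\in(0,1)$ with $\left|\gamma-\tfrac12\right|\le \frac{1}{4\log p}$, $$\mathcal{E}\bigl(B_\gamma^{(p)},C_\gamma^{(p)}\bigr)\le K\left(\sqrt{k}\log p+\sqrt{\tfrac{nk}{b}}+\sqrt{\tfrac{nk\log p}{p}}+\sqrt{\tfrac{kp\log p}{b}}\right).$$ (ii) If additionally $p\le \sqrt{n}/4$, then for $\gamma=1-\frac{p}{\sqrt n}$, $$\mathcal{E}\bigl(B_\gamma^{(p)},C_\gamma^{(p)}\bigr)\le K\left(\sqrt{k}\,n^{1/4}+\sqrt{\tfrac{nk}{b}}\right).$$
   Context: $\log$ denotes the natural logarithm. $E\in\mathbb{R}^{n\times n}$ is the prefix-sum matrix: $E_{ij}=1$ if $i\ge j$ and $0$ otherwise. For $0<\gamma<1$ let $(\tilde c_\gamma)_i:=(-1)^i\binom{\gamma}{i}$, where $\binom{\gamma}{i}=\prod_{j=1}^{i}\frac{\gamma+1-j}{j}$ (so $(\tilde c_\gamma)_0=1$); equivalently $(1-x)^\gamma=\sum_{i\ge0}(\tilde c_\gamma)_i x^i$ for $|x|<1$. For an integer bandwidth $p\ge1$, $(C_\gamma^{(p)})^{-1}$ is the $n\times n$ lower-triangular Toeplitz matrix whose $r$-th subdiagonal ($r=0$ being the main diagonal) has all entries equal to $(\tilde c_\gamma)_r$ for $0\le r\le p-1$ and equal to $0$ for $r\ge p$; $C_\gamma^{(p)}$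 is its inverse (the "$\gamma$-BIFR strategy matrix"), and $B_\gamma^{(p)}:=E\,(C_\gamma^{(p)})^{-1}$, so $B_\gamma^{(p)}C_\gamma^{(p)}=E$. For an $n\times n$ matrix $C$ and integers $k,b\ge1$ with $(k-1)b\le n-1$, define $\mathrm{sens}_{k,b}(C):=\bigl\|\sum_{j=0}^{k-1}C_{[\cdot,jb]}\bigr\|_2$, where $C_{[\cdot,m]}$ denotes the $m$-th column of $C$ with columns indexed from $0$ (for lower-triangular Toeplitz $C$ with nonnegative nonincreasing diagonals this is the $\ell_2$-sensitivity under $b$-min-separated participation with at most $k$ participations). The RMSE of a factorization $E=BC$ is $\mathcal{E}(B,C):=\|B\|_F\cdot \mathrm{sens}_{k,b}(C)/\sqrt n$. *)

theory Defs
  imports Complex_Main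
begin

text \<open>n x n real matrices are represented as functions nat => nat => real,
  with indices 0..n-1 (entries outside this range are irrelevant / zero).\<close>

definition ctil :: "real \<Rightarrow> nat \<Rightarrow> real" where
  "ctil \<gamma> i = (-1) ^ i * (\<gamma> gchoose i)"

definition Emat :: "nat \<Rightarrow> nat \<Rightarrow> real" where
  "Emat i j = (if j \<le> i then 1 else 0)"

text \<open>(C_gamma^(p))^{-1}: banded lower-triangular Toeplitz matrix.\<close>
definition strat_inv :: "real \<Rightarrow> nat \<Rightarrow> nat \<Rightarrow> nat \<Rightarrow> real" where
  "strat_inv \<gamma> p i j = (if j \<le> i \<and> i - j < p then ctil \<gamma> (i - j) else 0)"

definition mat_mul :: "nat \<Rightarrow> (nat \<Rightarrow> nat \<Rightarrow> real) \<Rightarrow> (nat \<Rightarrow> nat \<Rightarrow> real) \<Rightarrow> nat \<Rightarrow> nat \<Rightarrow> real" where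
  "mat_mul n A B i j = (\<Sum>l<n. A i l * B l j)"

text \<open>C_gamma^(p): the (unique) n x n inverse of strat_inv (entries outside range set to 0).\<close>
definition strat :: "real \<Rightarrow> nat \<Rightarrow> nat \<Rightarrow> nat \<Rightarrow> nat \<Rightarrow> real" where
  "strat \<gamma> p n = (THE C. (\<forall>i j. (n \<le> i \<or> n \<le> j) \<longrightarrow> C i j = 0) \<and>
     (\<forall>i<n. \<forall>j<n. mat_mul n (strat_inv \<gamma> p) C i j = (if i = j then 1 else 0)) \<and>
     (\<forall>i<n. \<forall>j<n. mat_mul n C (strat_inv \<gamma> p) i j = (if i = j then 1 else 0)))"

definition Bmat :: "real \<Rightarrow> nat \<Rightarrow> nat \<Rightarrow> nat \<Rightarrow> nat \<Rightarrow> real" where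
  "Bmat \<gamma> p n = mat_mul n Emat (strat_inv \<gamma> p)"

definition frob :: "nat \<Rightarrow> (nat \<Rightarrow> nat \<Rightarrow> real) \<Rightarrow> real" where
  "frob n A = sqrt (\<Sum>i<n. \<Sum>j<n. (A i j)^2)"

text \<open>sens_{k,b}(C) = || sum_{j=0}^{k-1} C[.,jb] ||_2 (columns indexed from 0).\<close>
definition sens :: "nat \<Rightarrow> nat \<Rightarrow> nat \<Rightarrow> (nat \<Rightarrow> nat \<Rightarrow> real) \<Rightarrow> real" where
  "sens n k b C = sqrt (\<Sum>i<n. (\<Sum>j<k. C i (j * b))^2)"

definition rmse :: "nat \<Rightarrow> nat \<Rightarrow> nat \<Rightarrow> (nat \<Rightarrow> nat \<Rightarrow> real) \<Rightarrow> (nat \<Rightarrow> nat \<Rightarrow> real) \<Rightarrow> real" where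
  "rmse n k b B C = frob n B * sens n k b C / sqrt (real n)"

end

theory Submission
  imports Defs "HOL-Analysis.Analysis"
begin

lemma gchoose_Suc_ratio:
  fixes a :: real
  shows "a gchoose (Suc k) = (a gchoose k) * (a - of_nat k) / (of_nat k + 1)"
proof -
  have "(a gchoose (Suc k)) * fact (Suc k) = (\<Prod>i = 0..<Suc k. a - of_nat i)"
    by (rule gbinomial_mult_fact')
  also have "\<dots> = (\<Prod>i = 0..<k. a - of_nat i) * (a - of_nat k)" by simp
  also have "\<dots> = (a gchoose k) * fact k * (a - of_nat k)" by (simp add: gbinomial_mult_fact')
  finally have "(a gchoose (Suc k)) * (fact k * (of_nat k + 1)) = (a gchoose k) * fact k * (a - of_nat k)"
    by (simp add: algebra_simps)
  then have "fact k * ((a gchoose (Suc k)) * (of_nat k + 1)) = fact k * ((a gchoose k) * (a - of_nat k))"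
    by (simp add: algebra_simps)
  then have "(a gchoose (Suc k)) * (of_nat k + 1) = (a gchoose k) * (a - of_nat k)"
    by (metis fact_nonzero mult_left_cancel)
  then show ?thesis by (simp add: field_simps)
qed

lemma ctil_0[simp]: "ctil g 0 = 1" by (simp add: ctil_def)

lemma ctil_Suc: "ctil g (Suc r) = ctil g r * (of_nat r - g) / (of_nat r + 1)"
  unfolding ctil_def gchoose_Suc_ratio by (simp add: field_simps)

definition sp :: "real \<Rightarrow> nat \<Rightarrow> real" where
  "sp g r = (\<Sum>i\<le>r. ctil g i)"

lemma sp_0[simp]: "sp g 0 = 1" by (simp add: sp_def)

lemma ctil_Suc_sp: "ctil g (Suc r) = - g * sp g r / (of_nat r + 1)"
proof (induction r)
  case 0 then show ?case by (simp add: ctil_Suc)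
next
  case (Suc r)
  have e1: "sp g (Suc r) = sp g r * (of_nat r + 1 - g) / (of_nat r + 1)"
    using Suc by (simp add: sp_def field_simps)
  have "ctil g (Suc (Suc r)) = ctil g (Suc r) * (of_nat (Suc r) - g) / (of_nat (Suc r) + 1)"
    by (rule ctil_Suc)
  also have "\<dots> = (- g * sp g r / (of_nat r + 1)) * (of_nat r + 1 - g) / (of_nat r + 2)"
    using Suc by (simp add: algebra_simps)
  also have "\<dots> = - g * sp g (Suc r) / (of_nat (Suc r) + 1)"
    unfolding e1 by (simp add: divide_simps)
  finally show ?case .
qed

lemma sp_Suc: "sp g (Suc r) = sp g r * (1 - g / (of_nat r + 1))"
proof -
  have "sp g (Suc r) = sp g r + ctil g (Suc r)" by (simp add: sp_def)
  then show ?thesis by (simp add: ctil_Suc_sp field_simps)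
qed

lemma sp_pos: "g < 1 \<Longrightarrow> sp g r > 0"
proof (induction r)
  case (Suc r)
  have "g / (of_nat r + 1) < 1" using Suc.prems by (simp add: divide_less_eq)
  then show ?case using Suc by (simp add: sp_Suc)
qed simp

lemma sp_le1: "0 \<le> g \<Longrightarrow> g < 1 \<Longrightarrow> sp g r \<le> 1"
proof (induction r)
  case (Suc r)
  have a: "g / (of_nat r + 1) < 1" using Suc.prems by (simp add: divide_less_eq)
  have b: "g / (of_nat r + 1) \<ge> 0" using Suc.prems by simp
  have "sp g r * (1 - g / (of_nat r + 1)) \<le> 1 * 1"
    using Suc a b sp_pos[of g r] by (intro mult_mono) auto
  then show ?case by (simp add: sp_Suc)
qed simp

lemma ctil_Suc_neg: "0 < g \<Longrightarrow> g < 1 \<Longrightarrow> ctil g (Suc r) < 0"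
  using sp_pos[of g r] by (simp add: ctil_Suc_sp divide_neg_pos mult_pos_pos)

definition ee :: "real \<Rightarrow> nat \<Rightarrow> real" where
  "ee g m = (-1)^m * ((-g) gchoose m)"

lemma ee_0[simp]: "ee g 0 = 1" by (simp add: ee_def)

lemma ee_Suc: "ee g (Suc m) = ee g m * (of_nat m + g) / (of_nat m + 1)"
  unfolding ee_def gchoose_Suc_ratio by (simp add: field_simps)

lemma ee_pos: "0 < g \<Longrightarrow> ee g m > 0"
  by (induction m) (auto simp: ee_Suc)

lemma ee_dec: "g < 1 \<Longrightarrow> 0 < g \<Longrightarrow> ee g (Suc m) \<le> ee g m"
proof -
  assume a: "g < 1" "0 < g"
  have "(of_nat m + g) / (of_nat m + 1) \<le> 1" using a by simp
  then have "ee g m * ((of_nat m + g) / (of_nat m + 1)) \<le> ee g m * 1"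
    using ee_pos[OF a(2), of m] by (intro mult_left_mono) auto
  then show ?thesis by (simp add: ee_Suc)
qed

lemma ee_conv: "(\<Sum>r\<le>m. ctil g r * ee g (m - r)) = (if m = 0 then 1 else 0)"
proof -
  have "(\<Sum>r\<le>m. ctil g r * ee g (m - r)) = (-1)^m * (\<Sum>r\<in>{0..m}. (g gchoose r) * ((-g) gchoose (m - r)))"
    unfolding sum_distrib_left atMost_atLeast0
  proof (rule sum.cong)
    fix r assume "r \<in> {0..m}"
    then have "(-1::real)^r * (-1)^(m-r) = (-1)^m" by (simp flip: power_add)
    then show "ctil g r * ee g (m - r) = (-1)^m * ((g gchoose r) * ((-g) gchoose (m - r)))"
      unfolding ctil_def ee_def by (metis (no_types, lifting) mult.assoc mult.left_commute)
  qed simp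
  also have "\<dots> = (-1)^m * (0 gchoose m)" by (simp add: gbinomial_Vandermonde)
  finally show ?thesis by (simp add: gbinomial_0_left)
qed

definition ff :: "real \<Rightarrow> nat \<Rightarrow> nat \<Rightarrow> real" where
  "ff g p r = (if 1 \<le> r \<and> r < p then - ctil g r else 0)"

function dd :: "real \<Rightarrow> nat \<Rightarrow> nat \<Rightarrow> real" where
  "dd g p m = (if m = 0 then 1 else (\<Sum>r\<in>{1..m}. ff g p r * dd g p (m - r)))"
  by auto
termination by (relation "Wellfounded.measure (\<lambda>(g,p,m). m)") auto

declare dd.simps[simp del]

lemma dd_0[simp]: "dd g p 0 = 1" by (simp add: dd.simps)
lemma dd_pos_eq: "m \<noteq> 0 \<Longrightarrow> dd g p m = (\<Sum>r\<in>{1..m}. ff g p r * dd g p (m - r))"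
  by (simp add: dd.simps)

lemma ff_nonneg: "0 < g \<Longrightarrow> g < 1 \<Longrightarrow> ff g p r \<ge> 0"
  unfolding ff_def using ctil_Suc_neg[of g "r - 1"] by (auto simp: less_imp_le)

lemma ff_le: "0 < g \<Longrightarrow> g < 1 \<Longrightarrow> 1 \<le> r \<Longrightarrow> ff g p r \<le> - ctil g r"
  unfolding ff_def using ctil_Suc_neg[of g "r - 1"] by auto

lemma dd_nonneg: assumes "0 < g" "g < 1" shows "dd g p m \<ge> 0"
proof (induction m rule: less_induct)
  case (less m)
  show ?case
  proof (cases "m = 0")
    case False
    then show ?thesis unfolding dd_pos_eq[where m=m, OF False]
      using less ff_nonneg[OF assms] by (intro sum_nonneg mult_nonneg_nonneg) auto
  qed simp
qed

lemma ee_conv1: "m \<noteq> 0 \<Longrightarrow> ee g m = (\<Sum>r\<in>{1..m}. - ctil g r * ee g (m - r))"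
proof -
  assume m: "m \<noteq> 0"
  have "(\<Sum>r\<le>m. ctil g r * ee g (m - r)) = ctil g 0 * ee g m + (\<Sum>r\<in>{1..m}. ctil g r * ee g (m - r))"
    by (simp add: atMost_atLeast0 sum.atLeast_Suc_atMost)
  then have "0 = ee g m + (\<Sum>r\<in>{1..m}. ctil g r * ee g (m - r))"
    using ee_conv[where m=m and g=g] m by simp
  then show ?thesis by (simp add: sum_negf)
qed

lemma dd_eq_ee: assumes "m < p" shows "dd g p m = ee g m"
  using assms
proof (induction m rule: less_induct)
  case (less m)
  show ?case
  proof (cases "m = 0")
    case False
    have "dd g p m = (\<Sum>r\<in>{1..m}. - ctil g r * ee g (m - r))"
      unfolding dd_pos_eq[where m=m, OF False]
      using less False by (intro sum.cong) (auto simp: ff_def)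
    then show ?thesis using ee_conv1 False by simp
  qed simp
qed

lemma ctil_nonpos: "0 < g \<Longrightarrow> g < 1 \<Longrightarrow> 1 \<le> r \<Longrightarrow> ctil g r \<le> 0"
  using ctil_Suc_neg[of g "r - 1"] by auto

lemma dd_le_ee: assumes "0 < g" "g < 1" shows "dd g p m \<le> ee g m"
proof (induction m rule: less_induct)
  case (less m)
  show ?case
  proof (cases "m = 0")
    case False
    have "dd g p m \<le> (\<Sum>r\<in>{1..m}. - ctil g r * ee g (m - r))"
      unfolding dd_pos_eq[where m=m, OF False]
      using less False ff_nonneg[OF assms] ff_le[OF assms] dd_nonneg[OF assms] ctil_nonpos[OF assms]
      by (intro sum_mono mult_mono) auto
    then show ?thesis using ee_conv1 False by simp
  qed simp
qed

lemma dd_dec_Suc: assumes "0 < g" "g < 1" shows "dd g p (Suc m) \<le> dd g p m"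
proof (induction m rule: less_induct)
  case (less m)
  show ?case
  proof (cases "Suc m < p")
    case True
    then show ?thesis using dd_eq_ee[of "Suc m" p] dd_eq_ee[of m p] ee_dec[OF assms(2,1)] by simp
  next
    case False
    show ?thesis
    proof (cases "m = 0")
      case True
      then show ?thesis using False by (simp add: dd_pos_eq ff_def)
    next
      case m0: False
      have "dd g p (Suc m) = (\<Sum>r\<in>{1..m}. ff g p r * dd g p (Suc m - r)) + ff g p (Suc m) * dd g p 0"
        by (simp add: dd_pos_eq sum.cl_ivl_Suc)
      also have "ff g p (Suc m) = 0" using False by (simp add: ff_def)
      also have "(\<Sum>r\<in>{1..m}. ff g p r * dd g p (Suc m - r)) + 0 * dd g p 0 = (\<Sum>r\<in>{1..m}. ff g p r * dd g p (Suc (m - r)))"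
        by simp (intro sum.cong; simp add: Suc_diff_le)
      also have "\<dots> \<le> (\<Sum>r\<in>{1..m}. ff g p r * dd g p (m - r))"
        using less ff_nonneg[OF assms] by (intro sum_mono mult_left_mono) auto
      also have "\<dots> = dd g p m" using m0 by (simp add: dd_pos_eq)
      finally show ?thesis .
    qed
  qed
qed

lemma dd_antimono: assumes "0 < g" "g < 1" "i \<le> j" shows "dd g p j \<le> dd g p i"
proof -
  have "decseq (dd g p)" by (rule decseq_SucI) (rule dd_dec_Suc[OF assms(1,2)])
  then show ?thesis using assms(3) by (simp add: decseqD)
qed

lemma ff_sum: assumes "1 \<le> p" and that: "0 < g" "g < 1" shows "(\<Sum>r<N. ff g p r) \<le> 1 - sp g (p - 1)"
proof -
  have "(\<Sum>r<N. ff g p r) = (\<Sum>r\<in>{..<N} \<inter> {..<p}. ff g p r)"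
    by (intro sum.mono_neutral_right) (auto simp: ff_def)
  also have "\<dots> \<le> (\<Sum>r<p. ff g p r)"
    using ff_nonneg[OF that] by (intro sum_mono2) auto
  also have "(\<Sum>r<p. ff g p r) = 1 - sp g (p - 1)"
  proof -
    have "sp g (p - 1) = (\<Sum>r<p. ctil g r)" unfolding sp_def using assms
      by (metis Suc_diff_1 less_le_trans zero_less_one lessThan_Suc_atMost)
    also have "\<dots> = 1 + (\<Sum>r<p. - ff g p r)"
    proof -
      have "(\<Sum>r<p. ctil g r) = (\<Sum>r<p. (if r = 0 then 1 else 0) - ff g p r)"
        by (intro sum.cong) (auto simp: ff_def Suc_le_eq)
      also have "\<dots> = 1 + (\<Sum>r<p. - ff g p r)" using assms by (simp add: sum_subtractf sum.delta sum_negf)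
      finally show ?thesis .
    qed
    finally show ?thesis by (simp add: sum_negf)
  qed
  finally show ?thesis .
qed

lemma dd_sum_bound: assumes "0 < g" "g < 1" "1 \<le> p"
  shows "(\<Sum>m<N. dd g p m) \<le> 1 / sp g (p - 1)"
proof (cases "N = 0")
  case True then show ?thesis using sp_pos[OF assms(2)] by (simp add: less_imp_le)
next
  case False
  define T where "T = (\<Sum>m<N. dd g p m)"
  have ff0: "ff g p 0 = 0" by (simp add: ff_def)
  have eq: "dd g p m = (if m = 0 then 1 else 0) + (\<Sum>r\<le>m. ff g p r * dd g p (m - r))" for m
  proof (cases "m = 0")
    case True then show ?thesis by (simp add: ff0)
  next
    case False
    have "(\<Sum>r\<le>m. ff g p r * dd g p (m - r)) = ff g p 0 * dd g p m + (\<Sum>r\<in>{1..m}. ff g p r * dd g p (m - r))"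
      by (simp add: atMost_atLeast0 sum.atLeast_Suc_atMost)
    then show ?thesis using False by (simp add: ff0 dd_pos_eq)
  qed
  have "T = (\<Sum>m<N. (if m = 0 then 1 else 0)) + (\<Sum>m<N. \<Sum>r\<le>m. ff g p r * dd g p (m - r))"
    unfolding T_def sum.distrib[symmetric] by (rule sum.cong[OF refl eq])
  also have "(\<Sum>m<N. (if m = 0 then 1 else (0::real))) = 1" using False by (simp add: sum.delta)
  also have "(\<Sum>m<N. \<Sum>r\<le>m. ff g p r * dd g p (m - r)) = (\<Sum>(r,l)\<in>{(i,j). i+j < N}. ff g p r * dd g p l)"
    by (rule sum.triangle_reindex[symmetric])
  also have "\<dots> \<le> (\<Sum>(r,l)\<in>{..<N} \<times> {..<N}. ff g p r * dd g p l)"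
    using ff_nonneg[OF assms(1,2)] dd_nonneg[OF assms(1,2)]
    by (intro sum_mono2) (auto intro: mult_nonneg_nonneg)
  also have "\<dots> = (\<Sum>r<N. ff g p r) * T"
    unfolding T_def sum.cartesian_product[symmetric] sum_product by simp
  also have "\<dots> \<le> (1 - sp g (p - 1)) * T"
    using ff_sum[OF assms(3,1,2)] dd_nonneg[OF assms(1,2)] unfolding T_def
    by (intro mult_right_mono sum_nonneg) auto
  finally have "sp g (p - 1) * T \<le> 1" by (simp add: algebra_simps)
  then show ?thesis using sp_pos[OF assms(2)] unfolding T_def by (simp add: field_simps)
qed

definition cp :: "real \<Rightarrow> nat \<Rightarrow> nat \<Rightarrow> real" where
  "cp g p r = (if r < p then ctil g r else 0)"

lemma strat_inv_eq: "strat_inv g p i j = (if j \<le> i then cp g p (i - j) else 0)"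
  by (simp add: strat_inv_def cp_def)

lemma cp_conv: assumes "1 \<le> p"
  shows "(\<Sum>r\<le>m. cp g p r * dd g p (m - r)) = (if m = 0 then 1 else 0)"
proof -
  have h: "cp g p r * dd g p (m - r) = (if r = 0 then dd g p m else 0) - ff g p r * dd g p (m - r)" for r
    using assms by (cases r) (auto simp: cp_def ff_def)
  have "(\<Sum>r\<le>m. cp g p r * dd g p (m - r)) = (\<Sum>r\<le>m. (if r = 0 then dd g p m else 0)) - (\<Sum>r\<le>m. ff g p r * dd g p (m - r))"
    unfolding h by (simp add: sum_subtractf)
  also have "(\<Sum>r\<le>m. (if r = 0 then dd g p m else 0)) = dd g p m" by (simp add: sum.delta)
  also have "(\<Sum>r\<le>m. ff g p r * dd g p (m - r)) = ff g p 0 * dd g p m + (\<Sum>r\<in>{1..m}. ff g p r * dd g p (m - r))"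
    by (simp add: atMost_atLeast0 sum.atLeast_Suc_atMost)
  finally show ?thesis by (cases "m = 0") (auto simp: ff_def dd_pos_eq)
qed

lemma conv_comm: "(\<Sum>r\<le>(m::nat). a r * b (m - r)) = (\<Sum>r\<le>m. a (m - r) * (b r :: real))"
proof -
  have "(\<Sum>r\<le>m. a r * b (m - r)) = (\<Sum>r\<in>{0..m}. a (m + 0 - r) * b (m - (m + 0 - r)))"
    unfolding atMost_atLeast0 by (rule sum.atLeastAtMost_rev)
  also have "\<dots> = (\<Sum>r\<le>m. a (m - r) * b r)"
    unfolding atMost_atLeast0 by (intro sum.cong) auto
  finally show ?thesis .
qed

lemma shift_sum: assumes "j \<le> i" "i < (n::nat)"
  shows "(\<Sum>l<n. (if j \<le> l \<and> l \<le> i then F l else 0)) = (\<Sum>t\<le>i-j. F (j + t) :: real)"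
proof -
  have "(\<Sum>l<n. (if j \<le> l \<and> l \<le> i then F l else 0)) = (\<Sum>l\<in>{j..i}. F l)"
  proof -
    have "(\<Sum>l<n. (if j \<le> l \<and> l \<le> i then F l else 0)) = sum F {l\<in>{..<n}. j \<le> l \<and> l \<le> i}"
      by (rule sum.inter_filter[symmetric]) simp
    also have "{l\<in>{..<n}. j \<le> l \<and> l \<le> i} = {j..i}" using assms by auto
    finally show ?thesis .
  qed
  also have "{j..i} = {0 + j..(i - j) + j}" using assms by simp
  also have "(\<Sum>l\<in>{0 + j..(i - j) + j}. F l) = (\<Sum>t\<in>{0..i-j}. F (t + j))"
    by (rule sum.shift_bounds_cl_nat_ivl)
  finally show ?thesis by (simp add: atMost_atLeast0 add.commute)
qed

definition TT :: "real \<Rightarrow> nat \<Rightarrow> nat \<Rightarrow> nat \<Rightarrow> nat \<Rightarrow> real" where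
  "TT g p n i j = (if i < n \<and> j < n \<and> j \<le> i then dd g p (i - j) else 0)"

lemma AT_id: assumes "1 \<le> p" "i < n" "j < n"
  shows "mat_mul n (strat_inv g p) (TT g p n) i j = (if i = j then 1 else 0)"
proof (cases "j \<le> i")
  case True
  have "mat_mul n (strat_inv g p) (TT g p n) i j = (\<Sum>l<n. (if j \<le> l \<and> l \<le> i then cp g p (i - l) * dd g p (l - j) else 0))"
    unfolding mat_mul_def strat_inv_eq TT_def using assms by (intro sum.cong) auto
  also have "\<dots> = (\<Sum>t\<le>i-j. cp g p (i - (j + t)) * dd g p (j + t - j))"
    by (rule shift_sum[OF True assms(2)])
  also have "\<dots> = (\<Sum>t\<le>i-j. cp g p ((i - j) - t) * dd g p t)"
    by (intro sum.cong) auto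
  also have "\<dots> = (\<Sum>t\<le>i-j. cp g p t * dd g p ((i - j) - t))"
    by (rule conv_comm[symmetric])
  also have "\<dots> = (if i - j = 0 then 1 else 0)" by (rule cp_conv[OF assms(1)])
  also have "\<dots> = (if i = j then 1 else 0)" using True by auto
  finally show ?thesis .
next
  case False
  then show ?thesis unfolding mat_mul_def strat_inv_eq TT_def
    by (auto intro!: sum.neutral)
qed

lemma TA_id: assumes "1 \<le> p" "i < n" "j < n"
  shows "mat_mul n (TT g p n) (strat_inv g p) i j = (if i = j then 1 else 0)"
proof (cases "j \<le> i")
  case True
  have "mat_mul n (TT g p n) (strat_inv g p) i j = (\<Sum>l<n. (if j \<le> l \<and> l \<le> i then dd g p (i - l) * cp g p (l - j) else 0))"
    unfolding mat_mul_def strat_inv_eq TT_def using assms by (intro sum.cong) auto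
  also have "\<dots> = (\<Sum>t\<le>i-j. dd g p (i - (j + t)) * cp g p (j + t - j))"
    by (rule shift_sum[OF True assms(2)])
  also have "\<dots> = (\<Sum>t\<le>i-j. cp g p t * dd g p ((i - j) - t))"
    by (intro sum.cong) auto
  also have "\<dots> = (if i - j = 0 then 1 else 0)" by (rule cp_conv[OF assms(1)])
  also have "\<dots> = (if i = j then 1 else 0)" using True by auto
  finally show ?thesis .
next
  case False
  then show ?thesis unfolding mat_mul_def strat_inv_eq TT_def
    by (auto intro!: sum.neutral)
qed

lemma strat_eq: assumes "1 \<le> p" shows "strat g p n = TT g p n"
  unfolding strat_def
proof (rule the_equality)
  show "(\<forall>i j. (n \<le> i \<or> n \<le> j) \<longrightarrow> TT g p n i j = 0) \<and>
     (\<forall>i<n. \<forall>j<n. mat_mul n (strat_inv g p) (TT g p n) i j = (if i = j then 1 else 0)) \<and>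
     (\<forall>i<n. \<forall>j<n. mat_mul n (TT g p n) (strat_inv g p) i j = (if i = j then 1 else 0))"
    using AT_id[OF assms, of _ n _ g] TA_id[OF assms, of _ n _ g] by (simp add: TT_def)
next
  fix C
  assume H: "(\<forall>i j. (n \<le> i \<or> n \<le> j) \<longrightarrow> C i j = 0) \<and>
     (\<forall>i<n. \<forall>j<n. mat_mul n (strat_inv g p) C i j = (if i = j then 1 else 0)) \<and>
     (\<forall>i<n. \<forall>j<n. mat_mul n C (strat_inv g p) i j = (if i = j then 1 else 0))"
  then have H1: "\<And>i j. (n \<le> i \<or> n \<le> j) \<Longrightarrow> C i j = 0"
    and H3: "\<And>i j. i < n \<Longrightarrow> j < n \<Longrightarrow> (\<Sum>l<n. C i l * strat_inv g p l j) = (if i = j then 1 else 0)"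
    unfolding mat_mul_def by blast+
  show "C = TT g p n"
  proof (intro ext)
    fix i j
    show "C i j = TT g p n i j"
    proof (cases "i < n \<and> j < n")
      case False
      then have "C i j = 0" using H1 by auto
      moreover have "TT g p n i j = 0" using False unfolding TT_def by auto
      ultimately show ?thesis by simp
    next
      case True
      have "C i j = (\<Sum>l<n. C i l * (if l = j then 1 else 0))"
        using True by (simp add: sum.delta if_distrib cong: if_cong)
      also have "\<dots> = (\<Sum>l<n. C i l * (\<Sum>m<n. strat_inv g p l m * TT g p n m j))"
      proof (intro sum.cong refl)
        fix l assume "l \<in> {..<n}"
        then have "(\<Sum>m<n. strat_inv g p l m * TT g p n m j) = (if l = j then 1 else 0)"
          using AT_id[OF assms, of l n j g] True unfolding mat_mul_def by simp
        then show "C i l * (if l = j then 1 else 0) = C i l * (\<Sum>m<n. strat_inv g p l m * TT g p n m j)"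
          by simp
      qed
      also have "\<dots> = (\<Sum>m<n. (\<Sum>l<n. C i l * strat_inv g p l m) * TT g p n m j)"
        unfolding sum_distrib_left sum_distrib_right mult.assoc by (rule sum.swap)
      also have "\<dots> = (\<Sum>m<n. (if i = m then 1 else 0) * TT g p n m j)"
      proof (intro sum.cong refl)
        fix m assume "m \<in> {..<n}"
        then show "(\<Sum>l<n. C i l * strat_inv g p l m) * TT g p n m j = (if i = m then 1 else 0) * TT g p n m j"
          using H3[of i m] True by simp
      qed
      also have "\<dots> = (\<Sum>m<n. if i = m then TT g p n m j else 0)" by (intro sum.cong) auto
      also have "\<dots> = TT g p n i j" using True by (simp add: sum.delta)
      finally show ?thesis .
    qed
  qed
qed

lemma cp_sum: assumes "1 \<le> p" shows "(\<Sum>r\<le>m. cp g p r) = sp g (min m (p - 1))"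
proof (induction m)
  case 0 then show ?case using assms by (simp add: cp_def)
next
  case (Suc m)
  have e: "(\<Sum>r\<le>Suc m. cp g p r) = (\<Sum>r\<le>m. cp g p r) + cp g p (Suc m)" by simp
  show ?case
  proof (cases "Suc m < p")
    case True
    then have m1: "min m (p - 1) = m" "min (Suc m) (p - 1) = Suc m" by auto
    have "sp g (Suc m) = sp g m + ctil g (Suc m)" by (simp add: sp_def)
    then show ?thesis using Suc True unfolding e m1 by (simp add: cp_def)
  next
    case False
    then have m1: "min m (p - 1) = p - 1" "min (Suc m) (p - 1) = p - 1" by auto
    have "cp g p (Suc m) = 0" using False by (simp add: cp_def)
    then show ?thesis using Suc unfolding e m1 by simp
  qed
qed

lemma Bmat_eq: assumes "1 \<le> p" "i < n" "j < n"
  shows "Bmat g p n i j = (if j \<le> i then sp g (min (i - j) (p - 1)) else 0)"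
proof (cases "j \<le> i")
  case True
  have "Bmat g p n i j = (\<Sum>l<n. (if j \<le> l \<and> l \<le> i then cp g p (l - j) else 0))"
    unfolding Bmat_def mat_mul_def Emat_def strat_inv_eq by (intro sum.cong) auto
  also have "\<dots> = (\<Sum>t\<le>i-j. cp g p (j + t - j))"
    by (rule shift_sum[OF True assms(2)])
  also have "\<dots> = sp g (min (i - j) (p - 1))" using cp_sum[OF assms(1)] by simp
  finally show ?thesis using True by simp
next
  case False
  then show ?thesis unfolding Bmat_def mat_mul_def Emat_def strat_inv_eq
    by (auto intro!: sum.neutral)
qed

lemma rev_sum: "(\<Sum>j\<le>(i::nat). G (i - j)) = (\<Sum>m\<le>i. (G m :: real))"
proof -
  have "(\<Sum>j\<le>i. G (i - j)) = (\<Sum>j\<le>i. G (i - j) * 1)" by simp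
  also have "\<dots> = (\<Sum>j\<le>i. G (i - (i - j)) * 1)"
    by (rule conv_comm[where a="\<lambda>j. G (i - j)" and b="\<lambda>_. 1"])
  also have "\<dots> = (\<Sum>m\<le>i. G m)" by (intro sum.cong) auto
  finally show ?thesis .
qed

lemma row_sum_le: assumes "i < n" "\<And>m. G m \<ge> 0"
  shows "(\<Sum>j<n. (if j \<le> i then G (i - j) else 0)) \<le> (\<Sum>m<(n::nat). (G m :: real))"
proof -
  have "(\<Sum>j<n. (if j \<le> i then G (i - j) else 0)) = (\<Sum>j\<in>{j\<in>{..<n}. j \<le> i}. G (i - j))"
    by (rule sum.inter_filter[symmetric]) simp
  also have "{j\<in>{..<n}. j \<le> i} = {..i}" using assms by auto
  also have "(\<Sum>j\<le>i. G (i - j)) = (\<Sum>m\<le>i. G m)" by (rule rev_sum)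
  also have "\<dots> \<le> (\<Sum>m<n. G m)" using assms by (intro sum_mono2) auto
  finally show ?thesis .
qed

lemma col_sum_le: assumes "\<And>m. G m \<ge> 0"
  shows "(\<Sum>i<n. (if c \<le> i then G (i - c) else 0)) \<le> (\<Sum>m<(n::nat). (G m :: real))"
proof (cases "c \<le> n")
  case True
  have "(\<Sum>i<n. (if c \<le> i then G (i - c) else 0)) = (\<Sum>i\<in>{i\<in>{..<n}. c \<le> i}. G (i - c))"
    by (rule sum.inter_filter[symmetric]) simp
  also have "{i\<in>{..<n}. c \<le> i} = {0 + c..<(n - c) + c}" using True by auto
  also have "(\<Sum>i\<in>{0 + c..<(n - c) + c}. G (i - c)) = (\<Sum>m\<in>{0..<n - c}. G (m + c - c))"
    by (rule sum.shift_bounds_nat_ivl)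
  also have "\<dots> = (\<Sum>m\<in>{0..<n - c}. G m)" by simp
  also have "\<dots> \<le> (\<Sum>m<n. G m)" using assms by (intro sum_mono2) auto
  finally show ?thesis .
next
  case False
  then show ?thesis using assms by (simp add: sum_nonneg)
qed

definition BS :: "real \<Rightarrow> nat \<Rightarrow> nat \<Rightarrow> real" where
  "BS g p n = (\<Sum>m<p. (sp g m)^2) + real n * (sp g (p - 1))^2"

lemma frob_sq_bound: assumes "1 \<le> p" "p \<le> n"
  shows "(frob n (Bmat g p n))^2 \<le> real n * BS g p n"
proof -
  define G where "G m = (sp g (min m (p - 1)))^2" for m
  have G0: "G m \<ge> 0" for m by (simp add: G_def)
  have "(frob n (Bmat g p n))^2 = (\<Sum>i<n. \<Sum>j<n. (Bmat g p n i j)^2)"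
    unfolding frob_def by (simp add: sum_nonneg)
  also have "\<dots> = (\<Sum>i<n. \<Sum>j<n. (if j \<le> i then G (i - j) else 0))"
    using Bmat_eq[OF assms(1)] by (intro sum.cong refl) (auto simp: G_def)
  also have "\<dots> \<le> (\<Sum>i<n. \<Sum>m<n. G m)"
  proof (rule sum_mono)
    fix i assume "i \<in> {..<n}"
    then show "(\<Sum>j<n. (if j \<le> i then G (i - j) else 0)) \<le> (\<Sum>m<n. G m)"
      using row_sum_le[of i n G] G0 by auto
  qed
  also have "\<dots> = real n * (\<Sum>m<n. G m)" by simp
  also have "(\<Sum>m<n. G m) \<le> (\<Sum>m<n. (if m < p then (sp g m)^2 else 0) + (sp g (p - 1))^2)"
    using assms(1) by (intro sum_mono) (auto simp: G_def min_def)
  also have "\<dots> = (\<Sum>m<p. (sp g m)^2) + real n * (sp g (p - 1))^2"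
  proof -
    have "(\<Sum>m<n. (if m < p then (sp g m)^2 else 0)) = (\<Sum>m\<in>{m\<in>{..<n}. m < p}. (sp g m)^2)"
      by (rule sum.inter_filter[symmetric]) simp
    also have "{m\<in>{..<n}. m < p} = {..<p}" using assms by auto
    finally show ?thesis by (simp add: sum.distrib)
  qed
  finally show ?thesis unfolding BS_def by (simp add: mult_left_mono)
qed

lemma sq_expand: "(\<Sum>j<k. a j)^2 = (\<Sum>j<k. (a j)^2) + 2 * (\<Sum>j<k. a j * (\<Sum>j'<j. a j')) "
  for a :: "nat \<Rightarrow> real"
  by (induction k) (simp_all add: power2_eq_square algebra_simps sum_distrib_left)

lemma partial_col: assumes "0 < g" "g < 1" "j * b \<le> i"
  shows "real b * (\<Sum>j'<j. dd g p (i - j' * b)) \<le> (\<Sum>l\<in>{i + 1 - j * b..<i + 1}. dd g p l)"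
  using assms(3)
proof (induction j)
  case 0 then show ?case by simp
next
  case (Suc j)
  have jb: "j * b \<le> i" using Suc.prems by (simp add: add_le_imp_le_right)
  have "real b * dd g p (i - j * b) \<le> (\<Sum>l\<in>{i + 1 - Suc j * b..<i + 1 - j * b}. dd g p l)"
  proof -
    have c: "card {i + 1 - Suc j * b..<i + 1 - j * b} = b" using Suc.prems by simp
    have "of_nat (card {i + 1 - Suc j * b..<i + 1 - j * b}) * dd g p (i - j * b) \<le> (\<Sum>l\<in>{i + 1 - Suc j * b..<i + 1 - j * b}. dd g p l)"
      by (rule sum_bounded_below) (auto intro!: dd_antimono[OF assms(1,2)])
    then show ?thesis using c by simp
  qed
  moreover have "(\<Sum>l\<in>{i + 1 - Suc j * b..<i + 1 - j * b}. dd g p l) + (\<Sum>l\<in>{i + 1 - j * b..<i + 1}. dd g p l)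
      = (\<Sum>l\<in>{i + 1 - Suc j * b..<i + 1}. dd g p l)"
    using Suc.prems by (intro sum.atLeastLessThan_concat) auto
  ultimately show ?case using Suc.IH[OF jb] by (simp add: algebra_simps)
qed

definition SS :: "real \<Rightarrow> nat \<Rightarrow> nat \<Rightarrow> real" where
  "SS g p n = (\<Sum>m<n. dd g p m)"
definition QQ :: "real \<Rightarrow> nat \<Rightarrow> nat \<Rightarrow> real" where
  "QQ g p n = (\<Sum>m<n. (dd g p m)^2)"

lemma sens_sq_bound: assumes "0 < g" "g < 1" "1 \<le> p" "1 \<le> b"
  shows "(sens n k b (TT g p n))^2 \<le> real k * QQ g p n + 2 * real k * (SS g p n)^2 / real b"
proof -
  define S where "S = SS g p n"
  define a where "a i j = TT g p n i (j * b)" for i j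
  have dn: "dd g p m \<ge> 0" for m by (rule dd_nonneg[OF assms(1,2)])
  have a0: "a i j \<ge> 0" for i j using dn by (simp add: a_def TT_def)
  have S0: "S \<ge> 0" unfolding S_def SS_def using dn by (simp add: sum_nonneg)
  have cross: "a i j * (\<Sum>j'<j. a i j') \<le> a i j * (S / real b)" if "i < n" for i j
  proof (cases "a i j = 0")
    case True then show ?thesis by simp
  next
    case False
    then have jb: "j * b \<le> i" "j * b < n" by (auto simp: a_def TT_def split: if_splits)
    have "(\<Sum>j'<j. a i j') = (\<Sum>j'<j. dd g p (i - j' * b))"
    proof (intro sum.cong refl)
      fix j' assume "j' \<in> {..<j}"
      then have "j' * b \<le> j * b" by simp
      then have "j' * b \<le> i" "j' * b < n" using jb by linarith+
      then show "a i j' = dd g p (i - j' * b)" using that by (simp add: a_def TT_def)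
    qed
    also have "\<dots> \<le> (\<Sum>l\<in>{i + 1 - j * b..<i + 1}. dd g p l) / real b"
      using partial_col[OF assms(1,2) jb(1)] assms(4) by (simp add: field_simps)
    also have "(\<Sum>l\<in>{i + 1 - j * b..<i + 1}. dd g p l) \<le> S"
      unfolding S_def SS_def using that dn by (intro sum_mono2) auto
    finally have "(\<Sum>j'<j. a i j') \<le> S / real b" using assms(4) by (simp add: divide_right_mono)
    then show ?thesis using a0 by (intro mult_left_mono) auto
  qed
  have colQ: "(\<Sum>i<n. (a i j)^2) \<le> QQ g p n" for j
  proof -
    have "(\<Sum>i<n. (a i j)^2) = (\<Sum>i<n. (if j * b \<le> i then (if j * b < n then (dd g p (i - j * b))^2 else 0) else 0))"
      by (intro sum.cong) (auto simp: a_def TT_def)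
    also have "\<dots> \<le> (\<Sum>m<n. (if j * b < n then (dd g p m)^2 else 0))"
      by (rule col_sum_le) auto
    also have "\<dots> \<le> QQ g p n" unfolding QQ_def by (intro sum_mono) auto
    finally show ?thesis .
  qed
  have colS: "(\<Sum>i<n. a i j) \<le> S" for j
  proof -
    have "(\<Sum>i<n. a i j) = (\<Sum>i<n. (if j * b \<le> i then (if j * b < n then dd g p (i - j * b) else 0) else 0))"
      by (intro sum.cong) (auto simp: a_def TT_def)
    also have "\<dots> \<le> (\<Sum>m<n. (if j * b < n then dd g p m else 0))"
      by (rule col_sum_le) (auto simp: dn)
    also have "\<dots> \<le> S" unfolding S_def SS_def using dn by (intro sum_mono) auto
    finally show ?thesis .
  qed
  have "(sens n k b (TT g p n))^2 = (\<Sum>i<n. (\<Sum>j<k. a i j)^2)"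
    unfolding sens_def a_def by (simp add: sum_nonneg)
  also have "\<dots> = (\<Sum>i<n. (\<Sum>j<k. (a i j)^2)) + 2 * (\<Sum>i<n. \<Sum>j<k. a i j * (\<Sum>j'<j. a i j'))"
    unfolding sq_expand by (simp add: sum.distrib sum_distrib_left)
  also have "(\<Sum>i<n. \<Sum>j<k. a i j * (\<Sum>j'<j. a i j')) \<le> (\<Sum>i<n. \<Sum>j<k. a i j * (S / real b))"
    using cross by (intro sum_mono) auto
  also have "\<dots> = (\<Sum>j<k. \<Sum>i<n. a i j) * (S / real b)"
    unfolding sum_distrib_right by (rule sum.swap)
  also have "(\<Sum>j<k. \<Sum>i<n. a i j) \<le> real k * S"
    using sum_mono[of "{..<k}" "\<lambda>j. \<Sum>i<n. a i j" "\<lambda>_. S"] colS by simp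
  also have "(\<Sum>i<n. (\<Sum>j<k. (a i j)^2)) = (\<Sum>j<k. \<Sum>i<n. (a i j)^2)" by (rule sum.swap)
  also have "\<dots> \<le> real k * QQ g p n"
    using sum_mono[of "{..<k}" "\<lambda>j. \<Sum>i<n. (a i j)^2" "\<lambda>_. QQ g p n"] colQ by simp
  finally show ?thesis
    using S0 assms(4) unfolding S_def by (simp add: power2_eq_square mult_right_mono field_simps)
qed

definition EQ :: "real \<Rightarrow> nat \<Rightarrow> real" where
  "EQ g p = (\<Sum>m<p. (ee g m)^2)"

lemma QQ_bound: assumes "0 < g" "g < 1" "1 \<le> p" "p \<le> n"
  shows "QQ g p n \<le> EQ g p + ee g p / sp g (p - 1)"
proof -
  have dn: "dd g p m \<ge> 0" for m by (rule dd_nonneg[OF assms(1,2)])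
  have pw: "(dd g p m)^2 \<le> (if m < p then (ee g m)^2 else 0) + ee g p * dd g p m" for m
  proof (cases "m < p")
    case True then show ?thesis using dd_eq_ee[OF True] dn[of m] ee_pos[OF assms(1), of p] by simp
  next
    case False
    then have "dd g p m \<le> ee g p" using dd_antimono[OF assms(1,2), where p=p and i=p and j=m] dd_le_ee[OF assms(1,2), of p p] by simp
    then show ?thesis using False dn[of m] by (simp add: power2_eq_square mult_right_mono)
  qed
  have "QQ g p n \<le> (\<Sum>m<n. (if m < p then (ee g m)^2 else 0) + ee g p * dd g p m)"
    unfolding QQ_def using pw by (intro sum_mono) auto
  also have "\<dots> = EQ g p + ee g p * SS g p n"
  proof -
    have "(\<Sum>m<n. (if m < p then (ee g m)^2 else 0)) = (\<Sum>m\<in>{m\<in>{..<n}. m < p}. (ee g m)^2)"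
      by (rule sum.inter_filter[symmetric]) simp
    also have "{m\<in>{..<n}. m < p} = {..<p}" using assms by auto
    finally show ?thesis by (simp add: sum.distrib EQ_def SS_def sum_distrib_left)
  qed
  also have "\<dots> \<le> EQ g p + ee g p * (1 / sp g (p - 1))"
    using dd_sum_bound[OF assms(1-3)] ee_pos[OF assms(1), of p] unfolding SS_def
    by (intro add_left_mono mult_left_mono) auto
  finally show ?thesis by simp
qed

lemma rmse_generic: assumes "0 < g" "g < 1" "1 \<le> p" "p \<le> n" "1 \<le> b"
  shows "rmse n k b (Bmat g p n) (strat g p n) \<le>
    sqrt (BS g p n * (real k * (EQ g p + ee g p / sp g (p - 1)) + 2 * real k / (real b * (sp g (p - 1))^2)))"
proof -
  have spp: "sp g (p - 1) > 0" by (rule sp_pos[OF assms(2)])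
  have S0: "SS g p n \<ge> 0" unfolding SS_def using dd_nonneg[OF assms(1,2)] by (simp add: sum_nonneg)
  have S1: "SS g p n \<le> 1 / sp g (p - 1)" unfolding SS_def by (rule dd_sum_bound[OF assms(1-3)])
  have S2: "(SS g p n)^2 \<le> 1 / (sp g (p - 1))^2"
    using power_mono[OF S1 S0, of 2] by (simp add: power_divide)
  define X where "X = real k * (EQ g p + ee g p / sp g (p - 1)) + 2 * real k / (real b * (sp g (p - 1))^2)"
  have sens2: "(sens n k b (strat g p n))^2 \<le> X"
  proof -
    have "(sens n k b (strat g p n))^2 \<le> real k * QQ g p n + 2 * real k * (SS g p n)^2 / real b"
      unfolding strat_eq[OF assms(3)] by (rule sens_sq_bound[OF assms(1,2,3,5)])
    also have "\<dots> \<le> real k * (EQ g p + ee g p / sp g (p - 1)) + 2 * real k * (1 / (sp g (p - 1))^2) / real b"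
      using QQ_bound[OF assms(1-4)] S2 assms(5)
      by (intro add_mono mult_left_mono divide_right_mono) auto
    also have "\<dots> = X" unfolding X_def by (simp add: field_simps)
    finally show ?thesis .
  qed
  have frob2: "(frob n (Bmat g p n))^2 \<le> real n * BS g p n" by (rule frob_sq_bound[OF assms(3,4)])
  have n0: "real n > 0" using assms by simp
  have fr0: "frob n (Bmat g p n) \<ge> 0" unfolding frob_def by (simp add: sum_nonneg)
  have se0: "sens n k b (strat g p n) \<ge> 0" unfolding sens_def by (simp add: sum_nonneg)
  have BS0: "BS g p n \<ge> 0" unfolding BS_def by (simp add: sum_nonneg)
  have "(rmse n k b (Bmat g p n) (strat g p n))^2 = (frob n (Bmat g p n))^2 * (sens n k b (strat g p n))^2 / real n"
    unfolding rmse_def using n0 by (simp add: power_divide power_mult_distrib)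
  also have "\<dots> \<le> (real n * BS g p n) * X / real n"
    using frob2 sens2 n0 BS0 by (intro divide_right_mono mult_mono) auto
  also have "\<dots> = BS g p n * X" using n0 by simp
  finally have "(rmse n k b (Bmat g p n) (strat g p n))^2 \<le> BS g p n * X" .
  moreover have "rmse n k b (Bmat g p n) (strat g p n) \<ge> 0" unfolding rmse_def using fr0 se0 by simp
  ultimately show ?thesis unfolding X_def by (simp add: real_le_rsqrt)
qed

lemma bern: fixes d x :: real assumes "0 \<le> d" "d \<le> 1" "0 \<le> x"
  shows "(1 + x) powr d \<le> 1 + d * x"
proof -
  have "(1 + x) powr d * 1 powr (1 - d) \<le> d * (1 + x) + (1 - d) * 1"
    using assms by (intro Youngs_inequality_0) auto
  then show ?thesis by (simp add: algebra_simps)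
qed

lemma exp_lb_ratio: fixes r d :: real assumes "2 \<le> r" "0 \<le> d"
  shows "1 + d / r \<le> (r / (r - 1)) powr d"
proof -
  have r0: "r - 1 > 0" "r > 0" using assms by auto
  have "ln ((r - 1) / r) \<le> (r - 1) / r - 1" using r0 by (intro ln_le_minus_one) simp
  also have "\<dots> = - 1 / r" using r0 by (simp add: field_simps)
  finally have l1: "1 / r \<le> ln (r / (r - 1))" using r0 by (simp add: ln_div)
  have "1 + d / r \<le> 1 + d * ln (r / (r - 1))"
    using mult_left_mono[OF l1 assms(2)] by simp
  also have "\<dots> \<le> exp (d * ln (r / (r - 1)))" by (rule exp_ge_add_one_self)
  also have "\<dots> = (r / (r - 1)) powr d" using r0 by (simp add: powr_def)
  finally show ?thesis .
qed

lemma exp_lb_ratio2: assumes "0 \<le> d" "(0::real) \<le> m"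
  shows "1 - d / (m + 1) \<le> ((m + 1) / (m + 2)) powr d"
proof -
  have "ln ((m + 2) / (m + 1)) \<le> (m + 2) / (m + 1) - 1" using assms by (intro ln_le_minus_one) simp
  also have "\<dots> = 1 / (m + 1)" using assms by (simp add: field_simps)
  finally have l1: "- (1 / (m + 1)) \<le> ln ((m + 1) / (m + 2))" using assms by (simp add: ln_div)
  have "1 - d / (m + 1) \<le> 1 + d * ln ((m + 1) / (m + 2))"
    using mult_left_mono[OF l1 assms(1)] by simp
  also have "\<dots> \<le> exp (d * ln ((m + 1) / (m + 2)))" by (rule exp_ge_add_one_self)
  also have "\<dots> = ((m + 1) / (m + 2)) powr d" using assms by (simp add: powr_def)
  finally show ?thesis .
qed

lemma aux_cancel: "(x::real) \<ge> 0 \<Longrightarrow> (1 + x) * y / (x + 1) = y"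
  by (simp add: add.commute)

lemma sp_Suc': "sp g (Suc r) = sp g r * (real r + (1 - g)) / (real r + 1)"
  by (simp add: sp_Suc field_simps)

lemma sp_1: "sp g 1 = 1 - g" using sp_Suc[of g 0] by simp
lemma sp_1'[simp]: "sp g (Suc 0) = 1 - g" using sp_Suc[of g 0] by simp

lemma sp_lower: assumes "0 < g" "g < 1" "1 \<le> r"
  shows "(1 - g) * real r powr (1 - g) \<le> real r * sp g r"
  using assms(3)
proof (induction r rule: dec_induct)
  case base then show ?case by (simp add: sp_1)
next
  case (step r)
  define d where "d = 1 - g"
  have d: "0 < d" "d < 1" using assms by (auto simp: d_def)
  have r1: "real r \<ge> 1" using step by simp
  have "(1 + 1 / real r) powr d \<le> 1 + d * (1 / real r)" using d r1 by (intro bern) auto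
  then have "(real r + 1) powr d \<le> real r powr d * (1 + d / real r)"
  proof -
    have "(real r + 1) = real r * (1 + 1 / real r)" using r1 by (simp add: field_simps)
    then have "(real r + 1) powr d = real r powr d * (1 + 1 / real r) powr d"
      using r1 by (simp add: powr_mult)
    moreover have "real r powr d \<ge> 0" by simp
    ultimately show ?thesis using \<open>(1 + 1 / real r) powr d \<le> 1 + d * (1 / real r)\<close>
      by (simp add: mult_left_mono)
  qed
  also have "real r powr d * (1 + d / real r) = real r powr d * (real r + d) / real r"
    using r1 by (simp add: field_simps)
  finally have A0: "(real r + 1) powr d \<le> real r powr d * (real r + d) / real r" .
  have A: "d * (real r + 1) powr d \<le> d * (real r powr d) * (real r + d) / real r"
    using mult_left_mono[OF A0, of d] d by (simp add: mult.assoc)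
  have IH: "d * real r powr d \<le> real r * sp g r" using step.IH by (simp add: d_def)
  have "d * (real r powr d) * (real r + d) / real r \<le> (real r * sp g r) * (real r + d) / real r"
    using IH d r1 by (intro divide_right_mono mult_right_mono) auto
  also have "\<dots> = sp g r * (real r + d)" using r1 by simp
  also have "\<dots> = (real (Suc r)) * sp g (Suc r)"
  proof -
    have "real (Suc r) = real r + 1" by simp
    then show ?thesis unfolding sp_Suc' d_def by (simp add: aux_cancel)
  qed
  finally have B: "d * (real r powr d) * (real r + d) / real r \<le> real (Suc r) * sp g (Suc r)" .
  have "d * real (Suc r) powr d \<le> real (Suc r) * sp g (Suc r)"
    using A B by (simp only: of_nat_Suc add.commute[of 1])
  then show ?case by (simp add: d_def)
qed

lemma sp_upper2: assumes "0 < g" "g < 1" "2 \<le> r"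
  shows "real r * sp g r \<le> 2 * (1 - g) * (real r - 1) powr (1 - g)"
  using assms(3)
proof (induction r rule: dec_induct)
  case base
  have "sp g 2 = (1 - g) * (2 - g) / 2" using sp_Suc'[of g 1] by (simp add: sp_1 numeral_2_eq_2)
  then have e2: "2 * sp g 2 = g * g + 2 - 3 * g" using assms by (simp add: field_simps)
  have "g * g \<le> g" using assms by (simp add: mult_le_cancel_left1 less_imp_le)
  then show ?case using e2 by simp
next
  case (step r)
  define d where "d = 1 - g"
  have d: "0 < d" "d < 1" using assms by (auto simp: d_def)
  have r2: "real r \<ge> 2" using step by simp
  have IH: "real r * sp g r \<le> 2 * d * (real r - 1) powr d" using step.IH by (simp add: d_def)
  have key: "(real r - 1) powr d * (1 + d / real r) \<le> real r powr d"
  proof -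
    have "1 + d / real r \<le> (real r / (real r - 1)) powr d" using r2 d by (intro exp_lb_ratio) auto
    also have "\<dots> = real r powr d / (real r - 1) powr d" using r2 by (simp add: powr_divide)
    finally show ?thesis using r2 by (simp add: field_simps)
  qed
  have "real (Suc r) * sp g (Suc r) = sp g r * (real r + d)" unfolding sp_Suc' d_def by (simp add: aux_cancel)
  also have "\<dots> = (real r * sp g r) * (1 + d / real r)" using r2 by (simp add: field_simps)
  also have "\<dots> \<le> (2 * d * (real r - 1) powr d) * (1 + d / real r)"
    using IH d r2 by (intro mult_right_mono) auto
  also have "\<dots> = 2 * d * ((real r - 1) powr d * (1 + d / real r))" by simp
  also have "\<dots> \<le> 2 * d * real r powr d" using key d by (intro mult_left_mono) auto
  finally show ?case by (simp add: d_def)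
qed

lemma sp_upper: assumes "0 < g" "g < 1" "1 \<le> r"
  shows "real r * sp g r \<le> 2 * (1 - g) * real r powr (1 - g)"
proof (cases "r = 1")
  case True then show ?thesis using assms by (simp add: sp_1)
next
  case False
  then have "2 \<le> r" using assms by simp
  then have "real r * sp g r \<le> 2 * (1 - g) * (real r - 1) powr (1 - g)" by (rule sp_upper2[OF assms(1,2)])
  also have "\<dots> \<le> 2 * (1 - g) * real r powr (1 - g)"
    using assms \<open>2 \<le> r\<close> by (intro mult_left_mono powr_mono2) auto
  finally show ?thesis .
qed

lemma ee_upper: assumes "0 < g" "g < 1"
  shows "ee g m * (real m + 1) powr (1 - g) \<le> 1"
proof (induction m)
  case 0 then show ?case by simp
next
  case (Suc m)
  define d where "d = 1 - g"
  have d: "0 < d" "d < 1" using assms by (auto simp: d_def)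
  have e: "ee g (Suc m) = ee g m * (1 - d / (real m + 1))" unfolding ee_Suc d_def by (simp add: field_simps)
  have f: "0 \<le> 1 - d / (real m + 1)" using d by (simp add: field_simps)
  have "ee g (Suc m) * (real (Suc m) + 1) powr d = ee g m * (1 - d / (real m + 1)) * (real m + 2) powr d"
    unfolding e by (simp add: add.commute)
  also have "\<dots> \<le> ee g m * ((real m + 1) / (real m + 2)) powr d * (real m + 2) powr d"
    using exp_lb_ratio2[of d "real m"] d ee_pos[OF assms(1), of m] by (intro mult_right_mono mult_left_mono) auto
  also have "\<dots> = ee g m * (real m + 1) powr d"
    by (simp add: powr_divide)
  also have "\<dots> \<le> 1" using Suc by (simp add: d_def)
  finally show ?case by (simp add: d_def)
qed

lemma harm_bound: "1 \<le> N \<Longrightarrow> (\<Sum>m\<in>{1..N}. 1 / real m) \<le> 1 + ln (real N)"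
proof (induction N rule: dec_induct)
  case base then show ?case by simp
next
  case (step N)
  have N: "real N \<ge> 1" using step by simp
  have "ln (real N / (real N + 1)) \<le> real N / (real N + 1) - 1" using N by (intro ln_le_minus_one) simp
  also have "\<dots> = - (1 / (real N + 1))" using N by (simp add: field_simps)
  finally have "1 / (real N + 1) \<le> ln (real N + 1) - ln (real N)" using N by (simp add: ln_div)
  then show ?case using step by (simp add: add.commute)
qed

lemma inv_sq_bound: "(\<Sum>m\<in>{1..N}. 1 / (real m)^2) \<le> 2 - 1 / real (max N 1)"
proof (induction N)
  case 0 then show ?case by simp
next
  case (Suc N)
  show ?case
  proof (cases "N = 0")
    case True then show ?thesis by simp
  next
    case False
    then have N: "real N \<ge> 1" by simp
    have "1 / (real N + 1)^2 \<le> 1 / (real N * (real N + 1))"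
      using N by (intro frac_le) (auto simp: power2_eq_square)
    also have "\<dots> = 1 / real N - 1 / (real N + 1)" using N by (simp add: field_simps)
    finally have "1 / (real N + 1)^2 \<le> 1 / real N - 1 / (real N + 1)" .
    have m: "real (max N 1) = real N" "real (max (Suc N) 1) = real N + 1" using False by auto
    have "(\<Sum>m\<in>{1..Suc N}. 1 / (real m)^2) = (\<Sum>m\<in>{1..N}. 1 / (real m)^2) + 1 / (real N + 1)^2"
      by (simp add: add.commute)
    moreover have "(\<Sum>m\<in>{1..N}. 1 / (real m)^2) \<le> 2 - 1 / real N" using Suc.IH m by simp
    ultimately show ?thesis unfolding m(2) using \<open>1 / (real N + 1)^2 \<le> 1 / real N - 1 / (real N + 1)\<close> by linarith
  qed
qed

lemma inv_sqrt_bound: "(\<Sum>m\<in>{1..N}. 1 / sqrt (real m)) \<le> 2 * sqrt (real N)"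
proof (induction N)
  case 0 then show ?case by simp
next
  case (Suc N)
  have a: "sqrt (real N) < sqrt (real N + 1)" by simp
  have b: "sqrt (real N + 1) > 0" by simp
  have "1 / sqrt (real N + 1) \<le> 2 * sqrt (real N + 1) - 2 * sqrt (real N)"
  proof -
    have "1 = sqrt (real N + 1) * sqrt (real N + 1) - real N" by simp
    also have "\<dots> \<le> 2 * (sqrt (real N + 1) * sqrt (real N + 1)) - 2 * sqrt (real N) * sqrt (real N + 1)"
    proof -
      have "sqrt (real N) * sqrt (real N + 1) \<le> (real N + (real N + 1)) / 2"
        using arith_geo_mean_sqrt[of "real N" "real N + 1"] by (simp add: real_sqrt_mult)
      then show ?thesis by simp
    qed
    finally have "1 \<le> (2 * sqrt (real N + 1) - 2 * sqrt (real N)) * sqrt (real N + 1)"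
      by (simp add: algebra_simps)
    then show ?thesis using b by (simp add: divide_le_eq)
  qed
  then show ?case using Suc by (simp add: add.commute)
qed

lemma harm': "1 \<le> q \<Longrightarrow> (\<Sum>m<q. 1 / (real m + 1)) \<le> 1 + ln (real q)"
  using harm_bound[of q] by (simp add: sum.atLeast1_atMost_eq add.commute)

lemma inv_sq': "(\<Sum>m<q. 1 / (real m + 1)^2) \<le> 2"
proof -
  have "(\<Sum>m<q. 1 / (real m + 1)^2) = (\<Sum>m\<in>{1..q}. 1 / (real m)^2)"
    by (simp add: sum.atLeast1_atMost_eq add.commute)
  also have "\<dots> \<le> 2 - 1 / real (max q 1)" by (rule inv_sq_bound)
  also have "\<dots> \<le> 2" by simp
  finally show ?thesis .
qed

lemma inv_sqrt': "(\<Sum>m<q. 1 / sqrt (real m + 1)) \<le> 2 * sqrt (real q)"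
  using inv_sqrt_bound[of q] by (simp add: sum.atLeast1_atMost_eq add.commute)

lemma powr_sq: "0 < (x::real) \<Longrightarrow> (x powr a)^2 = x powr (2 * a)"
proof -
  have "x powr (2 * a) = x powr a * x powr a" by (simp only: mult_2 powr_add)
  then show ?thesis by (simp only: power2_eq_square)
qed

lemma sum_lessThan_Suc_first: "(\<Sum>m<Suc q. f m) = f 0 + (\<Sum>m<q. f (Suc m))" for f :: "nat \<Rightarrow> real"
  by (rule sum.lessThan_Suc_shift)

lemma sqrt4: assumes "0 \<le> a" "0 \<le> b" "0 \<le> c" "0 \<le> e"
  shows "sqrt (a + b + c + e) \<le> sqrt a + sqrt b + sqrt c + sqrt e"
proof -
  have 1: "sqrt (a + b + c + e) \<le> sqrt (a + b + c) + sqrt e" using assms by (intro sqrt_add_le_add_sqrt) auto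
  have 2: "sqrt (a + b + c) \<le> sqrt (a + b) + sqrt c" using assms by (intro sqrt_add_le_add_sqrt) auto
  have 3: "sqrt (a + b) \<le> sqrt a + sqrt b" using assms by (intro sqrt_add_le_add_sqrt) auto
  show ?thesis using 1 2 3 by linarith
qed

lemma part1:
  assumes p2: "2 \<le> p" and pn: "p \<le> n" and b1: "1 \<le> b" and g0: "0 < g" and g1: "g < 1"
    and gl: "\<bar>g - 1/2\<bar> \<le> 1 / (4 * ln (real p))"
  shows "rmse n k b (Bmat g p n) (strat g p n)
     \<le> 200 * (sqrt (real k) * ln (real p) + sqrt (real n * real k / real b)
                 + sqrt (real n * real k * ln (real p) / real p)
                 + sqrt (real k * real p * ln (real p) / real b))"
proof -
  define L where "L = ln (real p)"
  define d where "d = 1 - g"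
  define q where "q = p - 1"
  have pq: "p = Suc q" "1 \<le> q" using p2 by (auto simp: q_def)
  have rp: "real p = real q + 1" using pq by simp
  have qp: "real q \<le> real p" "real p \<le> 2 * real q" using pq by auto
  have L23: "L \<ge> 2/3"
  proof -
    have "ln (2::real) \<le> ln (real p)" using p2 by simp
    then show ?thesis using ln2_ge_two_thirds unfolding L_def by linarith
  qed
  have Lp: "L > 0" using L23 by simp
  have eta: "\<bar>1 - 2 * g\<bar> * L \<le> 1/2"
  proof -
    have "\<bar>g - 1/2\<bar> * (4 * L) \<le> 1" using gl Lp unfolding L_def by (simp add: field_simps)
    moreover have "\<bar>1 - 2 * g\<bar> = 2 * \<bar>g - 1/2\<bar>" by (auto simp: abs_if)
    ultimately show ?thesis by (simp add: algebra_simps)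
  qed
  have gd: "d \<ge> 1/8" "g \<ge> 1/8"
  proof -
    have "1 / (4 * L) \<le> 3/8" using L23 by (simp add: field_simps)
    then have "\<bar>g - 1/2\<bar> \<le> 3/8" using gl unfolding L_def by linarith
    then show "d \<ge> 1/8" "g \<ge> 1/8" unfolding d_def by (auto simp: abs_if split: if_splits)
  qed
  have d01: "0 < d" "d < 1" using g0 g1 by (auto simp: d_def)
  have e2: "exp (1/2::real) \<le> 2"
  proof -
    have "(1/2::real) \<le> ln 2" using ln2_ge_two_thirds by simp
    then have "exp (1/2::real) \<le> exp (ln 2)" by (simp only: exp_le_cancel_iff)
    then show ?thesis by simp
  qed
  have pw: "x powr (1 - 2 * g) \<le> 2 \<and> 1/2 \<le> x powr (1 - 2 * g)" if "1 \<le> x" "x \<le> real p" for x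
  proof -
    have lx: "0 \<le> ln x" "ln x \<le> L" using that unfolding L_def by auto
    have "\<bar>(1 - 2 * g) * ln x\<bar> \<le> \<bar>1 - 2 * g\<bar> * L"
      using lx by (simp add: abs_mult mult_left_mono)
    then have a: "\<bar>(1 - 2 * g) * ln x\<bar> \<le> 1/2" using eta by linarith
    have "x powr (1 - 2 * g) = exp ((1 - 2 * g) * ln x)" using that by (simp add: powr_def)
    moreover have "exp ((1 - 2 * g) * ln x) \<le> exp (1/2)" using a by simp
    moreover have "exp (- (1/2)) \<le> exp ((1 - 2 * g) * ln x)" using a by simp
    moreover have "exp (- (1/2::real)) \<ge> 1/2" using e2 by (simp add: exp_minus field_simps)
    ultimately show ?thesis using e2 by linarith
  qed
  have sq2d: "(x powr d)^2 = x * x powr (1 - 2 * g)" if "1 \<le> x" for x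
  proof -
    have "(x powr d)^2 = x powr (2 * d)" using that by (simp add: powr_sq)
    also have "2 * d = 1 + (1 - 2 * g)" unfolding d_def by simp
    also have "x powr (1 + (1 - 2 * g)) = x * x powr (1 - 2 * g)" using that by (subst powr_add) simp
    finally show ?thesis .
  qed
  have spm: "(sp g m)^2 \<le> 8 / real m" if "1 \<le> m" "m \<le> q" for m
  proof -
    have m1: "real m \<ge> 1" "real m \<le> real p" using that qp by auto
    have "real m * sp g m \<le> 2 * d * real m powr d" using sp_upper[OF g0 g1 that(1)] by (simp add: d_def)
    moreover have "0 \<le> real m * sp g m" using sp_pos[OF g1, of m] by simp
    ultimately have "(real m * sp g m)^2 \<le> (2 * d * real m powr d)^2" by (rule power_mono)
    also have "\<dots> = 4 * d^2 * (real m * real m powr (1 - 2 * g))"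
      using sq2d[OF m1(1)] by (simp add: power_mult_distrib)
    also have "\<dots> \<le> 4 * 1 * (real m * 2)"
      using pw[OF m1] d01 m1 by (intro mult_mono) (auto simp: power_le_one)
    finally have "real m * (real m * (sp g m)^2) \<le> real m * 8" by (simp add: power_mult_distrib power2_eq_square algebra_simps)
    then have "real m * (sp g m)^2 \<le> 8" using m1 by simp
    then show ?thesis using m1 by (simp add: field_simps)
  qed
  have BSb: "BS g p n \<le> 26 * L + 16 * real n / real p"
  proof -
    have "(\<Sum>m<p. (sp g m)^2) = 1 + (\<Sum>m<q. (sp g (Suc m))^2)"
      unfolding pq(1) sum_lessThan_Suc_first by simp
    also have "(\<Sum>m<q. (sp g (Suc m))^2) \<le> (\<Sum>m<q. 8 * (1 / (real m + 1)))"
    proof (rule sum_mono)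
      fix m assume "m \<in> {..<q}"
      then have "(sp g (Suc m))^2 \<le> 8 / real (Suc m)" using spm[of "Suc m"] by simp
      then show "(sp g (Suc m))^2 \<le> 8 * (1 / (real m + 1))" by (simp add: add.commute)
    qed
    also have "\<dots> = 8 * (\<Sum>m<q. 1 / (real m + 1))" by (simp add: sum_distrib_left)
    also have "\<dots> \<le> 8 * (1 + ln (real q))" using harm'[OF pq(2)] by simp
    also have "ln (real q) \<le> L" unfolding L_def using pq qp by simp
    finally have A: "(\<Sum>m<p. (sp g m)^2) \<le> 9 + 8 * L" by simp
    have "(sp g q)^2 \<le> 8 / real q" using spm[of q] pq by simp
    also have "\<dots> \<le> 16 / real p" using qp pq by (simp add: field_simps)
    finally have "(sp g q)^2 \<le> 16 / real p" .
    then have "real n * (sp g (p - 1))^2 \<le> real n * (16 / real p)"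
      unfolding q_def[symmetric] by (rule mult_left_mono) simp
    moreover have "real n * (16 / real p) = 16 * real n / real p" by simp
    ultimately show ?thesis using A L23 unfolding BS_def by linarith
  qed
  have EQb: "EQ g p \<le> 2 + 2 * L"
  proof -
    have "(ee g m)^2 \<le> 2 * (1 / (real m + 1))" if "m < p" for m
    proof -
      have m1: "1 \<le> real m + 1" "real m + 1 \<le> real p" using that by auto
      have "ee g m * (real m + 1) powr d \<le> 1" using ee_upper[OF g0 g1, of m] by (simp add: d_def)
      moreover have "0 \<le> ee g m * (real m + 1) powr d" using ee_pos[OF g0, of m] by simp
      ultimately have "(ee g m * (real m + 1) powr d)^2 \<le> 1" by (simp add: power_le_one)
      then have "(ee g m)^2 * ((real m + 1) * (real m + 1) powr (1 - 2 * g)) \<le> 1"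
        using sq2d[OF m1(1)] by (simp add: power_mult_distrib)
      moreover have "(ee g m)^2 * ((real m + 1) * (1/2)) \<le> (ee g m)^2 * ((real m + 1) * (real m + 1) powr (1 - 2 * g))"
        using pw[OF m1] by (intro mult_left_mono) auto
      ultimately have "(ee g m)^2 * (real m + 1) \<le> 2" by simp
      then show ?thesis by (simp add: field_simps)
    qed
    then have "EQ g p \<le> (\<Sum>m<p. 2 * (1 / (real m + 1)))" unfolding EQ_def by (intro sum_mono) auto
    also have "\<dots> = 2 * (\<Sum>m<p. 1 / (real m + 1))" by (simp add: sum_distrib_left)
    also have "\<dots> \<le> 2 * (1 + L)" using harm'[of p] p2 unfolding L_def by simp
    finally show ?thesis by simp
  qed
  define A where "A = real p powr d"
  define Bq where "Bq = real q powr d"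
  have A0: "A > 0" "Bq > 0" using pq by (auto simp: A_def Bq_def)
  have eeA: "ee g p * A \<le> 1"
  proof -
    have "ee g p \<le> ee g q" using ee_dec[OF g1 g0, of q] pq by simp
    moreover have "ee g q * A \<le> 1" using ee_upper[OF g0 g1, of q] rp by (simp add: A_def d_def)
    ultimately show ?thesis using A0 by (meson mult_right_mono less_imp_le order_trans)
  qed
  have spq: "d * Bq \<le> real q * sp g q" using sp_lower[OF g0 g1 pq(2)] by (simp add: Bq_def d_def)
  have BqA: "A \<le> 2 * Bq"
  proof -
    have "(real p / 2) powr d \<le> real q powr d" using qp d01 by (intro powr_mono2) auto
    moreover have "(real p / 2) powr d = A / 2 powr d" by (simp add: A_def powr_divide)
    moreover have "2 powr d \<le> 2" using d01 powr_mono[of d 1 2] by simp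
    ultimately have h: "A / 2 powr d \<le> Bq" "2 powr d \<le> 2" unfolding Bq_def by auto
    have "A / 2 \<le> A / 2 powr d" using h(2) A0 by (intro divide_left_mono) auto
    then show ?thesis using h(1) by linarith
  qed
  have AA: "A^2 \<ge> real p / 2"
  proof -
    have "A^2 = real p * real p powr (1 - 2 * g)" unfolding A_def using sq2d[of "real p"] p2 by simp
    moreover have "real p powr (1 - 2 * g) \<ge> 1/2" using pw[of "real p"] p2 by simp
    moreover have "real p * (1/2) \<le> real p * real p powr (1 - 2 * g)"
      using \<open>real p powr (1 - 2 * g) \<ge> 1/2\<close> by (intro mult_left_mono) auto
    ultimately show ?thesis by simp
  qed
  have spq_pos: "sp g q > 0" by (rule sp_pos[OF g1])
  have R1: "ee g p / sp g (p - 1) \<le> 32"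
  proof -
    have "2 * A^2 \<le> (16 * d) * A^2" using gd by (intro mult_right_mono) auto
    then have "real q \<le> 16 * d * A^2" using AA qp by linarith
    have "16 * d * A / real q \<le> 32 * sp g q"
    proof -
      have "16 * d * A \<le> 32 * d * Bq" using BqA d01 by simp
      also have "\<dots> \<le> 32 * (real q * sp g q)" using spq by simp
      finally show ?thesis using pq by (simp add: field_simps)
    qed
    moreover have "ee g p \<le> 16 * d * A / real q"
    proof -
      have "ee g p \<le> 1 / A" using eeA A0 by (simp add: field_simps)
      also have "1 / A \<le> 16 * d * A / real q"
        using \<open>real q \<le> 16 * d * A^2\<close> A0 pq by (simp add: field_simps power2_eq_square)
      finally show ?thesis .
    qed
    ultimately have "ee g p \<le> 32 * sp g q" by linarith
    then show ?thesis using spq_pos unfolding q_def[symmetric] by (simp add: divide_le_eq)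
  qed
  have R2: "1 / (sp g (p - 1))^2 \<le> 512 * real p"
  proof -
    have "d * A / (2 * real q) \<le> sp g q"
    proof -
      have "d * A \<le> 2 * (d * Bq)" using BqA d01 by simp
      also have "\<dots> \<le> 2 * (real q * sp g q)" using spq by simp
      finally show ?thesis using pq by (simp add: field_simps)
    qed
    then have "(d * A / (2 * real q))^2 \<le> (sp g q)^2" using A0 d01 by (intro power_mono) auto
    moreover have "1 / (512 * real p) \<le> (d * A / (2 * real q))^2"
    proof -
      have e1: "(d * A / (2 * real q))^2 = d^2 * A^2 / (4 * (real q)^2)" by (simp add: power_divide power_mult_distrib)
      have "(1/8::real)^2 \<le> d^2" using gd by (intro power_mono) auto
      then have d2: "d^2 \<ge> 1/64" by (simp add: power2_eq_square)
      have q2: "4 * (real q)^2 \<le> 4 * (real p)^2" using qp by (simp add: power_mono)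
      have h1: "(1/64) * (real p / 2) \<le> d^2 * A^2" using d2 AA by (intro mult_mono) auto
      have "(real p / 128) / (4 * (real p)^2) \<le> d^2 * A^2 / (4 * (real q)^2)"
        using h1 q2 pq by (intro frac_le) auto
      moreover have "(real p / 128) / (4 * (real p)^2) = 1 / (512 * real p)" using p2 by (simp add: power2_eq_square)
      ultimately show ?thesis using e1 by simp
    qed
    ultimately have "1 / (512 * real p) \<le> (sp g q)^2" by simp
    then show ?thesis using spq_pos p2 unfolding q_def[symmetric] by (simp add: field_simps)
  qed
  define X where "X = real k * (EQ g p + ee g p / sp g (p - 1)) + 2 * real k / (real b * (sp g (p - 1))^2)"
  have Xb: "X \<le> 70 * real k * L + 1024 * real k * real p / real b"
  proof -
    have "real k * (EQ g p + ee g p / sp g (p - 1)) \<le> real k * (2 + 2 * L + 32)"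
      using EQb R1 by (intro mult_left_mono) auto
    also have "\<dots> \<le> real k * (70 * L)" using L23 by (intro mult_left_mono) auto
    finally have a: "real k * (EQ g p + ee g p / sp g (p - 1)) \<le> 70 * real k * L" by simp
    have "2 * real k / (real b * (sp g (p - 1))^2) = 2 * real k / real b * (1 / (sp g (p - 1))^2)"
      by simp
    also have "\<dots> \<le> 2 * real k / real b * (512 * real p)" using R2 by (intro mult_left_mono) auto
    finally have "2 * real k / (real b * (sp g (p - 1))^2) \<le> 1024 * real k * real p / real b" by simp
    then show ?thesis using a unfolding X_def by simp
  qed
  have BS0: "BS g p n \<ge> 0" unfolding BS_def by (simp add: sum_nonneg)
  have X0: "X \<ge> 0" unfolding X_def using R1 spq_pos EQ_def ee_pos[OF g0] unfolding q_def
    by (intro add_nonneg_nonneg mult_nonneg_nonneg divide_nonneg_nonneg) (auto simp: EQ_def sum_nonneg less_imp_le)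
  define T1 where "T1 = real k * L^2"
  define T2 where "T2 = real n * real k / real b"
  define T3 where "T3 = real n * real k * L / real p"
  define T4 where "T4 = real k * real p * L / real b"
  have T0: "T1 \<ge> 0" "T2 \<ge> 0" "T3 \<ge> 0" "T4 \<ge> 0" using Lp by (auto simp: T1_def T2_def T3_def T4_def)
  have ring: "(a1 + a2) * (c1 + c2) = a1 * c1 + a1 * c2 + a2 * c1 + a2 * c2" for a1 a2 c1 c2 :: real
    by (simp add: algebra_simps)
  have "BS g p n * X \<le> (26 * L + 16 * real n / real p) * (70 * real k * L + 1024 * real k * real p / real b)"
    using BSb Xb BS0 X0 by (intro mult_mono) auto
  also have "\<dots> = (26 * L) * (70 * real k * L) + (26 * L) * (1024 * real k * real p / real b)
      + (16 * real n / real p) * (70 * real k * L) + (16 * real n / real p) * (1024 * real k * real p / real b)"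
    by (rule ring)
  also have "(26 * L) * (70 * real k * L) = 1820 * T1" by (simp add: T1_def power2_eq_square)
  also have "(26 * L) * (1024 * real k * real p / real b) = 26624 * T4" by (simp add: T4_def)
  also have "(16 * real n / real p) * (70 * real k * L) = 1120 * T3" by (simp add: T3_def)
  also have "(16 * real n / real p) * (1024 * real k * real p / real b) = 16384 * T2" using p2 by (simp add: T2_def)
  finally have BX0: "BS g p n * X \<le> 1820 * T1 + 26624 * T4 + 1120 * T3 + 16384 * T2" .
  have "26624 * (T1 + T2 + T3 + T4) = 26624 * T1 + 26624 * T2 + 26624 * T3 + 26624 * T4" by (simp add: algebra_simps)
  then have BX: "BS g p n * X \<le> 26624 * (T1 + T2 + T3 + T4)" using T0 BX0 by linarith
  have "rmse n k b (Bmat g p n) (strat g p n) \<le> sqrt (BS g p n * X)"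
    unfolding X_def using rmse_generic[OF g0 g1 _ pn b1] p2 by simp
  also have "\<dots> \<le> sqrt (26624 * (T1 + T2 + T3 + T4))"
    using BX by simp
  also have "\<dots> = sqrt 26624 * sqrt (T1 + T2 + T3 + T4)"
    by (rule real_sqrt_mult)
  also have "\<dots> \<le> 200 * (sqrt T1 + sqrt T2 + sqrt T3 + sqrt T4)"
  proof (rule mult_mono)
    have "sqrt 26624 \<le> sqrt ((200::real)^2)" by (rule real_sqrt_le_mono) simp
    then show "sqrt 26624 \<le> (200::real)" by simp
    show "sqrt (T1 + T2 + T3 + T4) \<le> sqrt T1 + sqrt T2 + sqrt T3 + sqrt T4"
      using T0 by (intro sqrt4) auto
  qed (use T0 in auto)
  also have "sqrt T1 = sqrt (real k) * L" using Lp by (simp add: T1_def real_sqrt_mult)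
  finally show ?thesis unfolding L_def T2_def T3_def T4_def .
qed

lemma part2:
  assumes p2: "2 \<le> p" and pn: "p \<le> n" and b1: "1 \<le> b"
    and ps: "real p \<le> sqrt (real n) / 4"
  shows "rmse n k b (Bmat (1 - real p / sqrt (real n)) p n) (strat (1 - real p / sqrt (real n)) p n)
     \<le> 200 * (sqrt (real k) * real n powr (1/4) + sqrt (real n * real k / real b))"
proof -
  define s where "s = sqrt (real n)"
  define d where "d = real p / s"
  define g where "g = 1 - d"
  define q where "q = p - 1"
  have s8: "s \<ge> 4 * real p" "s > 0" using ps p2 pn unfolding s_def by auto
  have ns: "real n = s^2" unfolding s_def by simp
  have d0: "0 < d" "d \<le> 1/4" using s8 p2 unfolding d_def by (auto simp: field_simps)
  have g0: "0 < g" and g1: "g < 1" using d0 unfolding g_def by auto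
  have dg: "1 - g = d" unfolding g_def by simp
  have sd: "s * d = real p" using s8 unfolding d_def by simp
  have nd: "real n * d^2 = (real p)^2" unfolding ns using sd by (simp add: power_mult_distrib[symmetric] mult.commute)
  have pq: "p = Suc q" "1 \<le> q" using p2 by (auto simp: q_def)
  have rp: "real p = real q + 1" using pq by simp
  have qp: "real q \<le> real p" "real p \<le> 2 * real q" using pq by auto
  define A where "A = real p powr d"
  define Bq where "Bq = real q powr d"
  have A1: "A \<ge> 1" unfolding A_def using p2 d0 by (intro ge_one_powr_ge_zero) auto
  have A0: "A > 0" "Bq > 0" using A1 pq by (auto simp: Bq_def)
  have spm: "(real m)^2 * (sp g m)^2 \<le> 4 * d^2 * A^2" if "1 \<le> m" "m \<le> q" for m
  proof -
    have "real m * sp g m \<le> 2 * d * real m powr d" using sp_upper[OF g0 g1 that(1)] by (simp add: dg)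
    also have "\<dots> \<le> 2 * d * A" unfolding A_def using that qp d0 by (intro mult_left_mono powr_mono2) auto
    finally have "real m * sp g m \<le> 2 * d * A" .
    moreover have "0 \<le> real m * sp g m" using sp_pos[OF g1, of m] by simp
    ultimately have "(real m * sp g m)^2 \<le> (2 * d * A)^2" by (rule power_mono)
    then show ?thesis by (simp add: power_mult_distrib)
  qed
  have BSb: "BS g p n \<le> 18 * A^2"
  proof -
    have "(\<Sum>m<p. (sp g m)^2) = 1 + (\<Sum>m<q. (sp g (Suc m))^2)"
      unfolding pq(1) sum_lessThan_Suc_first by simp
    also have "(\<Sum>m<q. (sp g (Suc m))^2) \<le> (\<Sum>m<q. (4 * d^2 * A^2) * (1 / (real m + 1)^2))"
    proof (rule sum_mono)
      fix m assume "m \<in> {..<q}"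
      then have "(real (Suc m))^2 * (sp g (Suc m))^2 \<le> 4 * d^2 * A^2" using spm[of "Suc m"] by simp
      then show "(sp g (Suc m))^2 \<le> (4 * d^2 * A^2) * (1 / (real m + 1)^2)"
        by (simp add: field_simps add.commute)
    qed
    also have "\<dots> = (4 * d^2 * A^2) * (\<Sum>m<q. 1 / (real m + 1)^2)" by (simp add: sum_distrib_left)
    also have "\<dots> \<le> (4 * d^2 * A^2) * 2" using inv_sq'[of q] by (intro mult_left_mono) auto
    also have "\<dots> \<le> A^2 / 2"
    proof -
      have "d^2 \<le> (1/4)^2" using d0 by (intro power_mono) auto
      then show ?thesis using A0 by (simp add: field_simps)
    qed
    finally have a: "(\<Sum>m<p. (sp g m)^2) \<le> 1 + A^2 / 2" by simp
    have "(real q)^2 * (sp g q)^2 \<le> 4 * d^2 * A^2" using spm[of q] pq by simp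
    moreover have "(real p)^2 \<le> 4 * (real q)^2"
    proof -
      have "(real p)^2 \<le> (2 * real q)^2" using qp by (intro power_mono) auto
      then show ?thesis by (simp add: power_mult_distrib)
    qed
    then have "(real p)^2 * (sp g q)^2 \<le> (4 * (real q)^2) * (sp g q)^2" by (rule mult_right_mono) simp
    ultimately have "(real p)^2 * (sp g q)^2 \<le> 16 * d^2 * A^2" by linarith
    then have "real n * d^2 * (sp g q)^2 \<le> 16 * d^2 * A^2" using nd by simp
    then have "d^2 * (real n * (sp g q)^2) \<le> d^2 * (16 * A^2)" by (simp add: algebra_simps)
    then have "real n * (sp g q)^2 \<le> 16 * A^2" using d0 by (simp add: mult_le_cancel_left)
    moreover have "A^2 \<ge> 1" using A1 by (simp add: one_le_power)
    ultimately show ?thesis using a unfolding BS_def q_def[symmetric] by linarith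
  qed
  have EQb: "A^2 * EQ g p \<le> 2 * real p"
  proof -
    have "A^2 * (ee g m)^2 \<le> sqrt (real p) * (1 / sqrt (real m + 1))" if "m < p" for m
    proof -
      have m1: "1 \<le> real m + 1" "real m + 1 \<le> real p" using that by auto
      have r1: "real p / (real m + 1) \<ge> 1" using m1 by simp
      have "A = (real p / (real m + 1)) powr d * (real m + 1) powr d"
        unfolding A_def by (simp add: powr_divide)
      then have "ee g m * A = (real p / (real m + 1)) powr d * (ee g m * (real m + 1) powr d)" by simp
      also have "\<dots> \<le> (real p / (real m + 1)) powr d * 1"
        using ee_upper[OF g0 g1, of m] by (intro mult_left_mono) (auto simp: dg)
      also have "\<dots> \<le> (real p / (real m + 1)) powr (1/4)" using r1 d0 by (simp add: powr_mono)
      finally have "ee g m * A \<le> (real p / (real m + 1)) powr (1/4)" .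
      moreover have "0 \<le> ee g m * A" using ee_pos[OF g0, of m] A0 by simp
      ultimately have "(ee g m * A)^2 \<le> ((real p / (real m + 1)) powr (1/4))^2" by (rule power_mono)
      also have "\<dots> = (real p / (real m + 1)) powr (1/2)" using r1 by (simp add: powr_sq)
      also have "\<dots> = sqrt (real p) * (1 / sqrt (real m + 1))"
        using r1 by (simp add: powr_half_sqrt real_sqrt_divide)
      finally show ?thesis by (simp add: power_mult_distrib mult.commute)
    qed
    then have "A^2 * EQ g p \<le> (\<Sum>m<p. sqrt (real p) * (1 / sqrt (real m + 1)))"
      unfolding EQ_def sum_distrib_left by (intro sum_mono) auto
    also have "\<dots> = sqrt (real p) * (\<Sum>m<p. 1 / sqrt (real m + 1))" by (simp add: sum_distrib_left)
    also have "\<dots> \<le> sqrt (real p) * (2 * sqrt (real p))" using inv_sqrt'[of p] by (intro mult_left_mono) auto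
    also have "\<dots> = 2 * real p" by simp
    finally show ?thesis .
  qed
  have eeA: "ee g p * A \<le> 1"
  proof -
    have "ee g p \<le> ee g q" using ee_dec[OF g1 g0, of q] pq by simp
    moreover have "ee g q * A \<le> 1" using ee_upper[OF g0 g1, of q] rp by (simp add: A_def dg)
    ultimately show ?thesis using A0 by (meson mult_right_mono less_imp_le order_trans)
  qed
  have spq: "d * Bq \<le> real q * sp g q" using sp_lower[OF g0 g1 pq(2)] by (simp add: Bq_def dg)
  have BqA: "A \<le> 2 * Bq"
  proof -
    have "(real p / 2) powr d \<le> real q powr d" using qp d0 by (intro powr_mono2) auto
    moreover have "(real p / 2) powr d = A / 2 powr d" by (simp add: A_def powr_divide)
    moreover have "2 powr d \<le> 2" using d0 powr_mono[of d 1 2] by simp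
    ultimately have h: "A / 2 powr d \<le> Bq" "2 powr d \<le> 2" unfolding Bq_def by auto
    have "A / 2 \<le> A / 2 powr d" using h(2) A0 by (intro divide_left_mono) auto
    then show ?thesis using h(1) by linarith
  qed
  have spq_pos: "sp g q > 0" by (rule sp_pos[OF g1])
  have spl: "d * A \<le> 2 * real q * sp g q"
  proof -
    have "d * A \<le> 2 * (d * Bq)" using BqA d0 by simp
    also have "\<dots> \<le> 2 * (real q * sp g q)" using spq by simp
    finally show ?thesis by simp
  qed
  have R1: "A^2 * (ee g p / sp g (p - 1)) \<le> 2 * s"
  proof -
    have "A^2 * ee g p = A * (ee g p * A)" by (simp add: power2_eq_square algebra_simps)
    also have "\<dots> \<le> A * 1" using eeA A0 by (intro mult_left_mono) auto
    finally have "A^2 * ee g p \<le> A" by simp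
    also have "A \<le> 2 * s * sp g q"
    proof -
      have "real q * A \<le> real p * A" using qp A0 by (intro mult_right_mono) auto
      also have "\<dots> = s * (d * A)" using sd by simp
      also have "\<dots> \<le> s * (2 * real q * sp g q)" using spl s8 by (intro mult_left_mono) auto
      finally have "real q * A \<le> real q * (2 * s * sp g q)" by (simp add: algebra_simps)
      then show ?thesis using pq by simp
    qed
    finally show ?thesis using spq_pos unfolding q_def[symmetric] by (simp add: field_simps)
  qed
  have R2: "A^2 * (1 / (sp g (p - 1))^2) \<le> 4 * real n"
  proof -
    have "(d * A)^2 \<le> (2 * real q * sp g q)^2" using spl d0 A0 by (intro power_mono) auto
    then have "d^2 * A^2 \<le> 4 * (real q)^2 * (sp g q)^2" by (simp add: power_mult_distrib)
    also have "\<dots> \<le> 4 * (real p)^2 * (sp g q)^2" using qp by (intro mult_right_mono mult_left_mono power_mono) auto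
    also have "\<dots> = d^2 * (4 * real n * (sp g q)^2)" using nd by (simp add: algebra_simps)
    finally have "A^2 \<le> 4 * real n * (sp g q)^2" using d0 by (simp add: mult_le_cancel_left)
    then show ?thesis using spq_pos unfolding q_def[symmetric] by (simp add: field_simps)
  qed
  define X where "X = real k * (EQ g p + ee g p / sp g (p - 1)) + 2 * real k / (real b * (sp g (p - 1))^2)"
  have AX: "A^2 * X \<le> 3 * real k * s + 8 * real k * real n / real b"
  proof -
    have "A^2 * X = real k * (A^2 * EQ g p + A^2 * (ee g p / sp g (p - 1))) + 2 * real k / real b * (A^2 * (1 / (sp g (p - 1))^2))"
      unfolding X_def by (simp add: algebra_simps)
    also have "\<dots> \<le> real k * (2 * real p + 2 * s) + 2 * real k / real b * (4 * real n)"
      using EQb R1 R2 by (intro add_mono mult_left_mono) auto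
    also have "\<dots> \<le> real k * (3 * s) + 2 * real k / real b * (4 * real n)"
      using s8 by (intro add_mono mult_left_mono) auto
    finally show ?thesis by simp
  qed
  have X0: "X \<ge> 0" unfolding X_def using spq_pos ee_pos[OF g0] unfolding q_def
    by (intro add_nonneg_nonneg mult_nonneg_nonneg divide_nonneg_nonneg) (auto simp: EQ_def sum_nonneg less_imp_le)
  have "BS g p n * X \<le> 18 * A^2 * X" using BSb X0 by (intro mult_right_mono) auto
  also have "\<dots> \<le> 18 * (3 * real k * s + 8 * real k * real n / real b)" using AX by simp
  also have "\<dots> \<le> 144 * (real k * s + real n * real k / real b)"
  proof -
    have "0 \<le> real k * s" "0 \<le> real n * real k / real b" using s8 by auto
    moreover have "8 * real k * real n / real b = 8 * (real n * real k / real b)" by simp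
    ultimately show ?thesis by (simp add: algebra_simps)
  qed
  finally have BX: "BS g p n * X \<le> 144 * (real k * s + real n * real k / real b)" .
  have h144: "sqrt (144::real) = 12"
  proof -
    have "sqrt ((12::real)^2) = 12" by (rule real_sqrt_abs[THEN trans]) simp
    then show ?thesis by simp
  qed
  have "rmse n k b (Bmat g p n) (strat g p n) \<le> sqrt (BS g p n * X)"
    unfolding X_def using rmse_generic[OF g0 g1 _ pn b1] p2 by simp
  also have "\<dots> \<le> sqrt (144 * (real k * s + real n * real k / real b))" using BX by simp
  also have "\<dots> = 12 * sqrt (real k * s + real n * real k / real b)"
    by (simp only: real_sqrt_mult h144)
  also have "\<dots> \<le> 12 * (sqrt (real k * s) + sqrt (real n * real k / real b))"
    using s8 by (intro mult_left_mono sqrt_add_le_add_sqrt) auto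
  also have "\<dots> \<le> 200 * (sqrt (real k * s) + sqrt (real n * real k / real b))"
    using s8 by (intro mult_right_mono add_nonneg_nonneg) auto
  also have "sqrt (real k * s) = sqrt (real k) * real n powr (1/4)"
  proof -
    have "real n powr (1/4) = (real n powr (1/2)) powr (1/2)" by (simp add: powr_powr)
    also have "\<dots> = sqrt s" unfolding s_def by (simp add: powr_half_sqrt)
    finally show ?thesis by (simp add: real_sqrt_mult)
  qed
  finally show ?thesis unfolding g_def d_def s_def .
qed

theorem mainTheorem1:
  shows "\<exists>K>0. \<forall>n p k b :: nat.
    2 \<le> p \<longrightarrow> p \<le> n \<longrightarrow> 1 \<le> b \<longrightarrow> 1 \<le> k \<longrightarrow> real k \<le> real n / real b \<longrightarrow>
    ((\<forall>\<gamma>::real. 0 < \<gamma> \<longrightarrow> \<gamma> < 1 \<longrightarrow> \<bar>\<gamma> - 1/2\<bar> \<le> 1 / (4 * ln (real p)) \<longrightarrow>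
        rmse n k b (Bmat \<gamma> p n) (strat \<gamma> p n)
          \<le> K * (sqrt (real k) * ln (real p) + sqrt (real n * real k / real b)
                 + sqrt (real n * real k * ln (real p) / real p)
                 + sqrt (real k * real p * ln (real p) / real b))) \<and>
     (real p \<le> sqrt (real n) / 4 \<longrightarrow>
        (let \<gamma> = 1 - real p / sqrt (real n) in
          rmse n k b (Bmat \<gamma> p n) (strat \<gamma> p n)
          \<le> K * (sqrt (real k) * real n powr (1/4) + sqrt (real n * real k / real b)))))"
proof (intro exI[of _ 200] conjI allI impI)
  show "(0::real) < 200" by simp
next
  fix n p k b :: nat and \<gamma> :: real
  assume "2 \<le> p" "p \<le> n" "1 \<le> b" "1 \<le> k" "real k \<le> real n / real b"
    "0 < \<gamma>" "\<gamma> < 1" "\<bar>\<gamma> - 1/2\<bar> \<le> 1 / (4 * ln (real p))"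
  then show "rmse n k b (Bmat \<gamma> p n) (strat \<gamma> p n)
          \<le> 200 * (sqrt (real k) * ln (real p) + sqrt (real n * real k / real b)
                 + sqrt (real n * real k * ln (real p) / real p)
                 + sqrt (real k * real p * ln (real p) / real b))"
    by (intro part1) auto
next
  fix n p k b :: nat
  assume "2 \<le> p" "p \<le> n" "1 \<le> b" "1 \<le> k" "real k \<le> real n / real b"
    "real p \<le> sqrt (real n) / 4"
  then show "let \<gamma> = 1 - real p / sqrt (real n) in
          rmse n k b (Bmat \<gamma> p n) (strat \<gamma> p n)
          \<le> 200 * (sqrt (real k) * real n powr (1/4) + sqrt (real n * real k / real b))"
    unfolding Let_def by (intro part2) auto
qed

end
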